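(* Let $\Phi\colon\mathcal{X}\to\mathcal{X}$ be an involution, $\Pi$ a closed convex family of conditional distributions $\pi\colon\mathcal{X}\to\Delta(\mathcal{Y})$, $\pi^*\in\mathcal{C}_{\mathrm{coh}}\cap\Pi$, and let $F(p)=\sum_kp_k\log p_k$ be the negative entropy on $\mathbb{R}^d_+$, so $\mathsf{B}_F=\mathsf{D}_{\mathrm{KL}}$ is the unnormalized relative entropy. Let $\overline\pi\in\arg\min_{\pi\in\mathcal{C}^\dagger_{\mathrm{coh}}}\mathsf{B}(\pi\parallel\pi_0)$ and $\widehat{\widehat\pi}\in\arg\min_{\pi\in\mathcal{C}_{\mathrm{coh}}\cap\Pi}\mathsf{B}(\pi\parallel\overline\pi)$. Then $$\mathbb{E}[\mathsf{D}_{\mathrm{KL}}(\pi^*(x)\parallel\pi_0(x))]-\mathbb{E}[\mathsf{D}_{\mathrm{KL}}(\pi^*(x)\parallel\widehat{\widehat\pi}(x))]\ge\mathbb{E}_{x\sim\mathcal{D}_{\mathcal{X}}}\Big[2\min\{\lambda(x),1-\lambda(x)\}\,\mathsf{D}^2_{\mathrm{Hell}}(\pi_0(x)\parallel\pi_0(\Phi(x)))\Big],$$ where $\lambda(x)=\frac{\mathbb{P}[x]}{\mathbb{P}[x]+\mathbb{P}[\Phi(x)]}$.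
   Context: $\mathcal{X},\mathcal{Y}$ finite, $d=|\mathcal{Y}|$; $\Pi_{\mathrm{all}}=\Delta(\mathcal{Y})^{\mathcal{X}}$; $\pi_0\in\Pi_{\mathrm{all}}$ baseline; $\mathcal{D}_{\mathcal{X}}$ full-support distribution on $\mathcal{X}$, $\mathbb{P}[x]=\mathcal{D}_{\mathcal{X}}(x)$, $\mathbb{E}=\mathbb{E}_{x\sim\mathcal{D}_{\mathcal{X}}}$. $\mathsf{B}(\pi\parallel\pi')=\mathbb{E}[\mathsf{B}_F(\pi(x)\parallel\pi'(x))]$. $\mathcal{C}^\dagger_{\mathrm{coh}}=\{\pi\in(\mathbb{R}^d_+)^{\mathcal{X}}:\pi(x)=\pi(\Phi(x))\ \forall x\}$, $\mathcal{C}_{\mathrm{coh}}=\mathcal{C}^\dagger_{\mathrm{coh}}\cap\Pi_{\mathrm{all}}$. Squared Hellinger distance: $\mathsf{D}^2_{\mathrm{Hell}}(p\parallel q)=1-\sum_k\sqrt{p_kq_k}$. *)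

theory Defs
  imports "HOL-Analysis.Analysis"
begin

text \<open>Conditional distributions / policies are elements of real^'y^'x (row pi $ x is a
  vector indexed by the finite label type 'y). Finite X and Y are the finite types 'x, 'y.\<close>

definition prob_vec :: "real^'y::finite \<Rightarrow> bool" where
  "prob_vec p \<longleftrightarrow> (\<forall>k. 0 \<le> p $ k) \<and> (\<Sum>k\<in>UNIV. p $ k) = 1"

definition Pi_all :: "(real^'y::finite^'x::finite) set" where
  "Pi_all = {\<pi>. \<forall>x. prob_vec (\<pi> $ x)}"

definition C_coh_dag :: "('x::finite \<Rightarrow> 'x) \<Rightarrow> (real^'y::finite^'x) set" where
  "C_coh_dag \<Phi> = {\<pi>. (\<forall>x k. 0 \<le> \<pi> $ x $ k) \<and> (\<forall>x. \<pi> $ x = \<pi> $ (\<Phi> x))}"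

definition C_coh :: "('x::finite \<Rightarrow> 'x) \<Rightarrow> (real^'y::finite^'x) set" where
  "C_coh \<Phi> = C_coh_dag \<Phi> \<inter> Pi_all"

text \<open>Bregman divergence of the negative entropy F(p) = sum_k p_k log p_k on R^d_+,
  i.e. the unnormalized relative entropy, coordinatewise
  p log(p/q) - p + q, with conventions 0 log(0/q) = 0 and p log(p/0) = +infinity for p > 0.\<close>
definition kl_term :: "real \<Rightarrow> real \<Rightarrow> ereal" where
  "kl_term p q = (if p = 0 then ereal q
                  else if q = 0 then \<infinity>
                  else ereal (p * ln (p / q) - p + q))"

definition KL :: "real^'y::finite \<Rightarrow> real^'y \<Rightarrow> ereal" where
  "KL p q = (\<Sum>k\<in>UNIV. kl_term (p $ k) (q $ k))"

definition Bpol :: "('x::finite \<Rightarrow> real) \<Rightarrow> real^'y::finite^'x \<Rightarrow> real^'y^'x \<Rightarrow> ereal" where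
  "Bpol D \<pi> \<pi>' = (\<Sum>x\<in>UNIV. ereal (D x) * KL (\<pi> $ x) (\<pi>' $ x))"

definition hell2 :: "real^'y::finite \<Rightarrow> real^'y \<Rightarrow> real" where
  "hell2 p q = 1 - (\<Sum>k\<in>UNIV. sqrt (p $ k * q $ k))"

end

theory Submission
  imports Defs
begin

definition kr :: "real \<Rightarrow> real \<Rightarrow> real" where
  "kr p q = (if p = 0 then q else p * ln (p / q) - p + q)"

lemma ln_strict: fixes x :: real assumes "0 < x" "x \<noteq> 1" shows "ln x < x - 1"
proof -
  have s: "sqrt x > 0" using assms by simp
  have "ln x = 2 * ln (sqrt x)"
    using assms by (simp add: ln_sqrt)
  also have "\<dots> \<le> 2 * (sqrt x - 1)" using ln_le_minus_one[OF s] by simp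
  also have "\<dots> < x - 1"
  proof -
    have "sqrt x \<noteq> 1" using assms by auto
    hence "(sqrt x - 1)^2 > 0" by simp
    thus ?thesis using assms by (simp add: power2_eq_square algebra_simps)
  qed
  finally show ?thesis .
qed

lemma kr_nonneg: assumes "0 \<le> p" "0 \<le> q" "0 < p \<Longrightarrow> 0 < q" shows "0 \<le> kr p q"
proof (cases "p = 0")
  case True thus ?thesis using assms by (simp add: kr_def)
next
  case False
  hence pq: "p > 0" "q > 0" using assms by auto
  have "ln (q/p) \<le> q/p - 1" using ln_le_minus_one pq by simp
  hence "p * ln (q/p) \<le> p * (q/p - 1)" using pq by (intro mult_left_mono) auto
  moreover have "p * (q/p - 1) = q - p" using pq by (simp add: field_simps)
  ultimately have "p * ln (q/p) \<le> q - p" by simp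
  moreover have "ln (p/q) = - ln (q/p)" using pq by (simp add: ln_div)
  ultimately show ?thesis using False by (simp add: kr_def)
qed

lemma kr_zero: assumes "0 \<le> p" "0 < q" "kr p q = 0" shows "p = q"
proof (rule ccontr)
  assume ne: "p \<noteq> q"
  show False
  proof (cases "p = 0")
    case True thus False using assms by (simp add: kr_def)
  next
    case False
    hence pq: "p > 0" using assms by auto
    have "q/p \<noteq> 1" using ne pq by auto
    hence "ln (q/p) < q/p - 1" using ln_strict pq assms by simp
    hence "p * ln (q/p) < p * (q/p - 1)" using pq by (intro mult_strict_left_mono) auto
    moreover have "p * (q/p - 1) = q - p" using pq by (simp add: field_simps)
    ultimately have "p * ln (q/p) < q - p" by simp
    moreover have "ln (p/q) = - ln (q/p)" using pq assms by (simp add: ln_div)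
    ultimately show False using False assms by (simp add: kr_def)
  qed
qed

lemma kl_term_kr: assumes "0 \<le> p" "0 \<le> q" "0 < p \<Longrightarrow> 0 < q" shows "kl_term p q = ereal (kr p q)"
proof -
  have "p = 0 \<or> 0 < q" using assms by linarith
  thus ?thesis using assms(1,2) by (auto simp: kl_term_def kr_def)
qed

lemma kl_term_nonneg: assumes "0 \<le> p" "0 \<le> q" shows "0 \<le> kl_term p q"
proof (cases "p = 0 \<or> q > 0")
  case True
  hence "kl_term p q = ereal (kr p q)" using assms by (intro kl_term_kr) auto
  thus ?thesis using kr_nonneg[of p q] True assms by auto
next
  case False thus ?thesis using assms by (simp add: kl_term_def)
qed

lemma kl_term_zero: assumes "0 \<le> p" "0 \<le> q" "kl_term p q = 0" shows "p = q"
proof (cases "q = 0")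
  case True thus ?thesis using assms by (auto simp: kl_term_def split: if_splits)
next
  case False
  hence "kl_term p q = ereal (kr p q)" using assms by (intro kl_term_kr) auto
  thus ?thesis using kr_zero[of p q] False assms by auto
qed

lemma kl_term_self: "0 \<le> p \<Longrightarrow> kl_term p p = 0"
  by (simp add: kl_term_def)

lemma KL_nonneg: "(\<forall>k. 0 \<le> p$k) \<Longrightarrow> (\<forall>k. 0 \<le> q$k) \<Longrightarrow> 0 \<le> KL p q"
  unfolding KL_def by (intro sum_nonneg) (simp add: kl_term_nonneg)

lemma young_hell:
  fixes a b l :: real
  assumes "0 \<le> a" "0 \<le> b" "0 < l" "l \<le> 1/2"
  shows "l * (a + b - 2 * sqrt (a * b)) \<le> l*a + (1-l)*b - a powr l * b powr (1 - l)"
proof (cases "a = 0 \<or> b = 0")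
  case True
  have "l * b \<le> (1 - l) * b" using assms by (intro mult_right_mono) auto
  moreover have "l * a \<le> (1 - l) * a" using assms by (intro mult_right_mono) auto
  ultimately show ?thesis using True assms by (auto simp: algebra_simps)
next
  case False
  hence ab: "a > 0" "b > 0" using assms by auto
  have "(sqrt a * sqrt b) powr (2*l) * b powr (1 - 2*l) \<le> (2*l) * (sqrt a * sqrt b) + (1 - 2*l) * b"
    using ab assms by (intro Youngs_inequality_0) auto
  moreover have "(sqrt a * sqrt b) powr (2*l) = a powr l * b powr l"
  proof -
    have "(sqrt a * sqrt b) powr (2*l) = ((a*b) powr (1/2)) powr (2*l)"
      using ab by (simp add: powr_half_sqrt real_sqrt_mult)
    also have "\<dots> = (a*b) powr l" by (simp add: powr_powr)
    also have "\<dots> = a powr l * b powr l" using ab by (simp add: powr_mult)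
    finally show ?thesis .
  qed
  moreover have "b powr l * b powr (1 - 2*l) = b powr (1 - l)"
    by (simp add: powr_add[symmetric])
  ultimately have "a powr l * b powr (1 - l) \<le> (2*l) * (sqrt a * sqrt b) + (1 - 2*l) * b"
    by (metis mult.assoc)
  thus ?thesis using ab by (simp add: real_sqrt_mult algebra_simps)
qed

lemma young_hell2:
  fixes a b l :: real
  assumes "0 \<le> a" "0 \<le> b" "0 < l" "l < 1"
  shows "min l (1-l) * (a + b - 2 * sqrt (a * b)) \<le> l*a + (1-l)*b - a powr l * b powr (1 - l)"
proof (cases "l \<le> 1/2")
  case True thus ?thesis using young_hell[OF assms(1,2,3) True] by simp
next
  case False
  have "(1-l) * (b + a - 2 * sqrt (b * a)) \<le> (1-l)*b + (1-(1-l))*a - b powr (1-l) * a powr (1 - (1-l))"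
    using False assms by (intro young_hell) auto
  thus ?thesis using False by (simp add: algebra_simps)
qed

lemma kl_split:
  fixes q a b dx dy :: real
  assumes q: "0 \<le> q" and a: "0 \<le> a" and b: "0 \<le> b" and dx: "0 < dx" and dy: "0 < dy"
  shows "ereal dx * kl_term q a + ereal dy * kl_term q b =
    ereal dx * kl_term q (a powr (dx/(dx+dy)) * b powr (1 - dx/(dx+dy)))
  + ereal dy * kl_term q (a powr (dx/(dx+dy)) * b powr (1 - dx/(dx+dy)))
  + ereal ((dx+dy) * ((dx/(dx+dy))*a + (1 - dx/(dx+dy))*b - a powr (dx/(dx+dy)) * b powr (1 - dx/(dx+dy))))"
proof -
  define l where "l = dx/(dx+dy)"
  define g where "g = a powr l * b powr (1 - l)"
  have l01: "0 < l" "l < 1" using dx dy by (auto simp: l_def field_simps)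
  have g0: "0 \<le> g" by (simp add: g_def)
  have dxl: "dx = (dx+dy) * l" and dyl: "dy = (dx+dy)*(1-l)" using dx dy by (auto simp: l_def field_simps)
  have "ereal dx * kl_term q a + ereal dy * kl_term q b =
    ereal dx * kl_term q g + ereal dy * kl_term q g + ereal ((dx+dy) * (l*a + (1-l)*b - g))"
  proof (cases "q = 0")
    case True
    have m1: "(dx+dy)*l = dx" "(dx+dy)*(1-l) = dy" using dxl dyl by simp_all
    have "(dx+dy) * (l*a + (1-l)*b - g) = ((dx+dy)*l)*a + ((dx+dy)*(1-l))*b - (dx+dy)*g"
      by (simp add: algebra_simps)
    hence "dx * a + dy * b = dx * g + dy * g + (dx+dy) * (l*a + (1-l)*b - g)"
      unfolding m1 by (simp add: algebra_simps)
    thus ?thesis using True by (simp add: kl_term_def)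
  next
    case False
    hence qp: "q > 0" using q by auto
    show ?thesis
    proof (cases "a = 0 \<or> b = 0")
      case True
      hence "g = 0" using l01 by (auto simp: g_def)
      moreover have "kl_term q a + kl_term q b \<ge> 0" using q a b by (simp add: kl_term_nonneg)
      moreover have "0 \<le> kl_term q a" "0 \<le> kl_term q b" using q a b by (auto simp: kl_term_nonneg)
      ultimately show ?thesis using True qp dx dy
        by (auto simp: kl_term_def)
    next
      case False
      hence ab: "a > 0" "b > 0" using a b by auto
      hence gp: "g > 0" by (simp add: g_def)
      have lng: "ln g = l * ln a + (1-l) * ln b" using ab by (simp add: g_def ln_mult ln_powr)
      have "dx * (q * ln (q / a) - q + a) + dy * (q * ln (q / b) - q + b) =
            dx * (q * ln (q / g) - q + g) + dy * (q * ln (q / g) - q + g) + (dx+dy) * (l*a + (1-l)*b - g)"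
      proof -
        have e: "ln (q/a) = ln q - ln a" "ln (q/b) = ln q - ln b" "ln (q/g) = ln q - ln g"
          using ab gp qp by (auto simp: ln_div)
        obtain S where S: "dx = S*l" "dy = S*(1-l)" using dxl dyl by blast
        show ?thesis unfolding e lng S
          by (simp add: algebra_simps)
      qed
      thus ?thesis using ab gp qp by (simp add: kl_term_def)
    qed
  qed
  thus ?thesis by (simp add: l_def g_def)
qed

lemma KL_split:
  fixes p a b :: "real^'y::finite"
  assumes p: "\<forall>k. 0 \<le> p$k" and a: "\<forall>k. 0 \<le> a$k" and b: "\<forall>k. 0 \<le> b$k" and dx: "0<dx" and dy: "0<dy"
  shows "ereal dx * KL p a + ereal dy * KL p b =
     ereal dx * KL p (\<chi> k. a$k powr (dx/(dx+dy)) * b$k powr (1 - dx/(dx+dy)))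
   + ereal dy * KL p (\<chi> k. a$k powr (dx/(dx+dy)) * b$k powr (1 - dx/(dx+dy)))
   + ereal ((dx+dy) * (\<Sum>k\<in>UNIV. (dx/(dx+dy))*a$k + (1-dx/(dx+dy))*b$k - a$k powr (dx/(dx+dy)) * b$k powr (1 - dx/(dx+dy))))"
proof -
  define G where "G = (\<chi> k. a$k powr (dx/(dx+dy)) * b$k powr (1 - dx/(dx+dy)))"
  have G0: "\<forall>k. 0 \<le> G$k" by (simp add: G_def)
  have nn: "\<And>c. \<forall>k. 0 \<le> c$k \<Longrightarrow> (\<And>k. 0 \<le> kl_term (p$k) (c$k))"
    using p by (simp add: kl_term_nonneg)
  have "ereal dx * KL p a + ereal dy * KL p b =
     (\<Sum>k\<in>UNIV. ereal dx * kl_term (p$k) (a$k) + ereal dy * kl_term (p$k) (b$k))"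
  proof -
    have e1: "ereal dx * KL p a = (\<Sum>k\<in>UNIV. ereal dx * kl_term (p$k) (a$k))"
      unfolding KL_def by (rule sum_ereal_right_distrib) (simp add: nn[OF a])
    have e2: "ereal dy * KL p b = (\<Sum>k\<in>UNIV. ereal dy * kl_term (p$k) (b$k))"
      unfolding KL_def by (rule sum_ereal_right_distrib) (simp add: nn[OF b])
    show ?thesis unfolding e1 e2 by (rule sum.distrib[symmetric])
  qed
  also have "\<dots> = (\<Sum>k\<in>UNIV. ereal dx * kl_term (p$k) (G$k) + ereal dy * kl_term (p$k) (G$k)
      + ereal ((dx+dy) * ((dx/(dx+dy))*a$k + (1-dx/(dx+dy))*b$k - a$k powr (dx/(dx+dy)) * b$k powr (1 - dx/(dx+dy)))))"
  proof (rule sum.cong[OF refl])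
    fix k
    have Gk: "G$k = a$k powr (dx/(dx+dy)) * b$k powr (1 - dx/(dx+dy))" by (simp add: G_def)
    show "ereal dx * kl_term (p$k) (a$k) + ereal dy * kl_term (p$k) (b$k) = ereal dx * kl_term (p$k) (G$k) + ereal dy * kl_term (p$k) (G$k)
      + ereal ((dx+dy) * ((dx/(dx+dy))*a$k + (1-dx/(dx+dy))*b$k - a$k powr (dx/(dx+dy)) * b$k powr (1 - dx/(dx+dy))))"
      unfolding Gk by (rule kl_split) (use p a b dx dy in auto)
  qed
  also have "\<dots> = ereal dx * KL p G + ereal dy * KL p G
     + ereal ((dx+dy) * (\<Sum>k\<in>UNIV. (dx/(dx+dy))*a$k + (1-dx/(dx+dy))*b$k - a$k powr (dx/(dx+dy)) * b$k powr (1 - dx/(dx+dy))))"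
  proof -
    have e1: "ereal dx * KL p G = (\<Sum>k\<in>UNIV. ereal dx * kl_term (p$k) (G$k))"
      unfolding KL_def by (rule sum_ereal_right_distrib) (simp add: nn[OF G0])
    have e2: "ereal dy * KL p G = (\<Sum>k\<in>UNIV. ereal dy * kl_term (p$k) (G$k))"
      unfolding KL_def by (rule sum_ereal_right_distrib) (simp add: nn[OF G0])
    show ?thesis unfolding e1 e2 sum_distrib_left sum_ereal[symmetric] sum.distrib ..
  qed
  finally show ?thesis unfolding G_def .
qed

lemma conv_term:
  fixes g h s t :: real
  assumes "0 \<le> g" "0 \<le> h" "0 \<le> s" "0 < t" "t < 1" "0 < s \<Longrightarrow> 0 < g" "0 < h \<Longrightarrow> 0 < g"
  shows "kr ((1-t)*h + t * s) g - kr h g \<le> t * (if s = 0 \<and> h = 0 then 0 else (s-h) * ln (((1-t)*h + t * s)/g))"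
proof (cases "s = 0 \<and> h = 0")
  case True thus ?thesis by simp
next
  case False
  define q where "q = (1-t)*h + t * s"
  have q0: "q > 0"
  proof (cases "h = 0")
    case True thus ?thesis using False assms by (simp add: q_def)
  next
    case False
    hence "(1-t)*h > 0" using assms by simp
    moreover have "t * s \<ge> 0" using assms by simp
    ultimately show ?thesis by (simp add: q_def)
  qed
  have g: "g > 0" using False assms by force
  show ?thesis
  proof (cases "h = 0")
    case True
    hence "q = t * s" by (simp add: q_def)
    thus ?thesis using True False q0 g by (simp add: kr_def q_def[symmetric])
  next
    case hne: False
    hence hp: "h > 0" using assms by simp
    have tq: "t*(s-h) = q - h" by (simp add: q_def algebra_simps)
    have "0 \<le> kr h q" using kr_nonneg[of h q] hp q0 by simp
    hence k: "0 \<le> h * ln (h/q) - h + q" using hne by (simp add: kr_def)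
    have "ln (h/q) = ln (h/g) - ln (q/g)" using hp q0 g by (simp add: ln_div)
    hence "h * ln (h/q) = h * ln (h/g) - h * ln (q/g)" by (simp add: right_diff_distrib)
    hence "kr q g - kr h g \<le> (q - h) * ln (q/g)" using k q0 hne
      by (simp add: kr_def algebra_simps)
    hence "kr q g - kr h g \<le> t * ((s - h) * ln (q/g))" using tq by (simp add: mult.assoc[symmetric])
    moreover have "(if s = 0 \<and> h = 0 then 0 else (s-h) * ln (q/g)) = (s-h)*ln(q/g)" using False by simp
    ultimately show ?thesis unfolding q_def by simp
  qed
qed

lemma decomp_term:
  fixes g h s t :: real
  assumes "0 \<le> h" "0 \<le> s" "0 < t" "0 < s \<Longrightarrow> 0 < g"
  shows "(if s = 0 \<and> h = 0 then 0 else (s-h) * ln (((1-t)*h + t * s)/g)) =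
    (if h > 0 then (s-h) * ln (((1-t)*h + t * s)/g) else if s > 0 then s * ln (s/g) else 0)
    + (if h = 0 \<and> s > 0 then s else 0) * ln t"
proof (cases "h > 0")
  case True thus ?thesis by auto
next
  case False
  hence h: "h = 0" using assms by simp
  show ?thesis
  proof (cases "s > 0")
    case True
    hence "ln (t * s/g) = ln t + ln (s/g)" using assms by (simp add: ln_div ln_mult)
    thus ?thesis using h True by (simp add: algebra_simps)
  next
    case False thus ?thesis using h assms by simp
  qed
qed

lemma fin_term:
  fixes g h s :: real
  assumes "0 \<le> g" "0 \<le> h" "0 \<le> s" "0 < s \<Longrightarrow> 0 < h" "0 < h \<Longrightarrow> 0 < g"
  shows "(if h > 0 then (s-h) * ln (h/g) else if s > 0 then s * ln (s/g) else 0) \<le> kr s g - kr s h"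
proof (cases "h > 0")
  case False
  hence "h = 0" "s = 0" using assms by force+
  thus ?thesis using assms by (simp add: kr_def)
next
  case True
  hence g: "g > 0" using assms by simp
  have k: "0 \<le> h * ln (h/g) - h + g" using kr_nonneg[of h g] True g by (simp add: kr_def)
  show ?thesis
  proof (cases "s = 0")
    case True thus ?thesis using k \<open>h > 0\<close> by (simp add: kr_def algebra_simps)
  next
    case False
    hence sp: "s > 0" using assms by simp
    have "ln (s/g) - ln (s/h) = ln (h/g)" using sp g True by (simp add: ln_div)
    hence "kr s g - kr s h = s * ln (h/g) + g - h" using False by (simp add: kr_def algebra_simps)
    thus ?thesis using k True by (simp add: algebra_simps)
  qed
qed

lemma sum_inv:
  fixes f :: "'x::finite \<Rightarrow> 'a::comm_monoid_add"
  assumes "\<forall>x. \<Phi> (\<Phi> x) = x"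
  shows "(\<Sum>x\<in>UNIV. f (\<Phi> x)) = (\<Sum>x\<in>UNIV. f x)"
  by (rule sum.reindex_bij_witness[where i=\<Phi> and j=\<Phi>]) (use assms in auto)

lemma Bpol_nonneg:
  assumes "\<forall>x. D x > 0" "\<forall>x k. 0 \<le> \<pi>$x$k" "\<forall>x k. 0 \<le> \<rho>$x$k"
  shows "0 \<le> Bpol D \<pi> \<rho>"
  unfolding Bpol_def using assms
  by (intro sum_nonneg ereal_0_le_mult) (auto intro: KL_nonneg less_imp_le)

lemma Bpol_real:
  assumes "\<forall>x k. 0 \<le> \<pi>$x$k" "\<forall>x k. 0 \<le> \<rho>$x$k" "\<forall>x k. 0 < \<pi>$x$k \<longrightarrow> 0 < \<rho>$x$k"
  shows "Bpol D \<pi> \<rho> = ereal (\<Sum>x\<in>UNIV. D x * (\<Sum>k\<in>UNIV. kr (\<pi>$x$k) (\<rho>$x$k)))"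
proof -
  have "\<And>x k. kl_term (\<pi>$x$k) (\<rho>$x$k) = ereal (kr (\<pi>$x$k) (\<rho>$x$k))"
    using assms by (intro kl_term_kr) auto
  thus ?thesis by (simp add: Bpol_def KL_def)
qed

lemma Bpol_fin:
  assumes "\<forall>x. D x > 0" "\<forall>x k. 0 \<le> \<pi>$x$k" "\<forall>x k. 0 \<le> \<rho>$x$k" "Bpol D \<pi> \<rho> \<noteq> \<infinity>"
    "0 < \<pi>$x$k"
  shows "0 < \<rho>$x$k"
proof (rule ccontr)
  assume "\<not> 0 < \<rho>$x$k"
  hence "\<rho>$x$k = 0" using assms(3) by (metis less_eq_real_def)
  hence "kl_term (\<pi>$x$k) (\<rho>$x$k) = \<infinity>" using assms(5) by (simp add: kl_term_def)
  hence "KL (\<pi>$x) (\<rho>$x) = \<infinity>" unfolding KL_def by (subst sum_Pinfty) auto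
  moreover have "D x > 0" using assms(1) by simp
  ultimately have "ereal (D x) * KL (\<pi>$x) (\<rho>$x) = \<infinity>" by simp
  hence "Bpol D \<pi> \<rho> = \<infinity>" unfolding Bpol_def by (subst sum_Pinfty) auto
  thus False using assms(4) by simp
qed

lemma Bpol_zero:
  assumes "\<forall>x. D x > 0" "\<forall>x k. 0 \<le> \<pi>$x$k" "\<forall>x k. 0 \<le> \<rho>$x$k" "Bpol D \<pi> \<rho> = 0"
  shows "\<pi> = \<rho>"
proof -
  have nn: "\<And>x. 0 \<le> ereal (D x) * KL (\<pi>$x) (\<rho>$x)"
    using assms by (intro ereal_0_le_mult) (auto intro: KL_nonneg less_imp_le)
  have "\<And>x. ereal (D x) * KL (\<pi>$x) (\<rho>$x) = 0"
  proof -
    have "(\<Sum>x\<in>UNIV. ereal (D x) * KL (\<pi>$x) (\<rho>$x)) = 0" using assms(4) by (simp add: Bpol_def)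
    moreover have "(\<Sum>x\<in>UNIV. ereal (D x) * KL (\<pi>$x) (\<rho>$x)) = 0 \<longleftrightarrow> (\<forall>x\<in>UNIV. ereal (D x) * KL (\<pi>$x) (\<rho>$x) = 0)"
      by (rule sum_nonneg_eq_0_iff) (auto simp: nn)
    ultimately show "\<And>x. ereal (D x) * KL (\<pi>$x) (\<rho>$x) = 0" by blast
  qed
  hence K: "\<And>x. KL (\<pi>$x) (\<rho>$x) = 0" using assms(1) by (metis ereal_eq_0(1) less_irrefl ereal_zero_times)
  have "\<And>x k. kl_term (\<pi>$x$k) (\<rho>$x$k) = 0"
  proof -
    fix x k
    have "(\<Sum>k\<in>UNIV. kl_term (\<pi>$x$k) (\<rho>$x$k)) = 0 \<longleftrightarrow> (\<forall>k\<in>UNIV. kl_term (\<pi>$x$k) (\<rho>$x$k) = 0)"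
      by (rule sum_nonneg_eq_0_iff) (use assms in \<open>auto simp: kl_term_nonneg\<close>)
    thus "kl_term (\<pi>$x$k) (\<rho>$x$k) = 0" using K[of x] unfolding KL_def by blast
  qed
  hence "\<And>x k. \<pi>$x$k = \<rho>$x$k" using assms kl_term_zero by blast
  thus ?thesis by (simp add: vec_eq_iff)
qed

theorem corollary4:
  fixes \<Phi> :: "'x::finite \<Rightarrow> 'x"
    and D :: "'x \<Rightarrow> real"
    and PiF :: "(real^'y::finite^'x) set"
    and \<pi>0 \<pi>star \<pi>bar \<pi>hat :: "real^'y^'x"
  assumes D_pos: "\<forall>x. D x > 0"
    and D_sum: "(\<Sum>x\<in>UNIV. D x) = 1"
    and inv: "\<forall>x. \<Phi> (\<Phi> x) = x"
    and Pi_sub: "PiF \<subseteq> Pi_all"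
    and Pi_closed: "closed PiF"
    and Pi_convex: "convex PiF"
    and pi0: "\<pi>0 \<in> Pi_all"
    and pistar: "\<pi>star \<in> C_coh \<Phi> \<inter> PiF"
    and pibar: "\<pi>bar \<in> C_coh_dag \<Phi>"
    and pibar_min: "\<forall>\<pi>\<in>C_coh_dag \<Phi>. Bpol D \<pi>bar \<pi>0 \<le> Bpol D \<pi> \<pi>0"
    and pihat: "\<pi>hat \<in> C_coh \<Phi> \<inter> PiF"
    and pihat_min: "\<forall>\<pi>\<in>C_coh \<Phi> \<inter> PiF. Bpol D \<pi>hat \<pi>bar \<le> Bpol D \<pi> \<pi>bar"
  shows "Bpol D \<pi>star \<pi>0 \<ge>
           ereal (\<Sum>x\<in>UNIV. D x * (2 * min (D x / (D x + D (\<Phi> x))) (1 - D x / (D x + D (\<Phi> x)))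
                                  * hell2 (\<pi>0 $ x) (\<pi>0 $ (\<Phi> x))))
           + Bpol D \<pi>star \<pi>hat"
proof -
  define Hs where "Hs = (\<Sum>x\<in>UNIV. D x * (2 * min (D x / (D x + D (\<Phi> x))) (1 - D x / (D x + D (\<Phi> x)))
                                  * hell2 (\<pi>0 $ x) (\<pi>0 $ (\<Phi> x))))"
  define lam where "lam x = D x / (D x + D (\<Phi> x))" for x
  define G :: "real^'y^'x" where "G = (\<chi> x. \<chi> k. (\<pi>0$x$k) powr lam x * (\<pi>0$(\<Phi> x)$k) powr (1 - lam x))"
  define cc where "cc x = (D x + D (\<Phi> x)) * (\<Sum>k\<in>UNIV. lam x * \<pi>0$x$k + (1 - lam x) * \<pi>0$(\<Phi> x)$k - G$x$k)" for x
  define C where "C = (\<Sum>x\<in>UNIV. cc x)"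
  have Dp: "\<And>x. D x > 0" using D_pos by auto
  have invx: "\<And>x. \<Phi> (\<Phi> x) = x" using inv by auto
  have lamP: "\<And>x. lam (\<Phi> x) = 1 - lam x"
  proof -
    fix x have "D (\<Phi> x) + D x > 0" using Dp[of x] Dp[of "\<Phi> x"] by simp
    thus "lam (\<Phi> x) = 1 - lam x" by (simp add: lam_def invx field_simps)
  qed
  have lam01: "\<And>x. 0 < lam x \<and> lam x < 1"
    using Dp by (auto simp: lam_def intro: divide_pos_pos add_pos_pos) (smt (verit) Dp divide_less_eq_1)
  have a0: "\<And>x k. 0 \<le> \<pi>0$x$k" using pi0 by (simp add: Pi_all_def prob_vec_def)
  have asum: "\<And>x. (\<Sum>k\<in>UNIV. \<pi>0$x$k) = 1" using pi0 by (simp add: Pi_all_def prob_vec_def)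
  have Gx: "\<And>x. G$x = (\<chi> k. (\<pi>0$x$k) powr (D x / (D x + D (\<Phi> x))) * (\<pi>0$(\<Phi> x)$k) powr (1 - D x / (D x + D (\<Phi> x))))"
    by (simp add: G_def lam_def)
  have G0: "\<And>x k. 0 \<le> G$x$k" by (simp add: G_def)
  have Gsym: "\<And>x. G$(\<Phi> x) = G$x" by (simp add: vec_eq_iff G_def lamP invx mult.commute)
  have GC: "G \<in> C_coh_dag \<Phi>" using G0 Gsym by (simp add: C_coh_dag_def)
  have ccx: "\<And>x. cc x = (D x + D (\<Phi> x)) * (\<Sum>k\<in>UNIV. (D x / (D x + D (\<Phi> x))) * \<pi>0$x$k + (1 - D x / (D x + D (\<Phi> x))) * \<pi>0$(\<Phi> x)$k
       - \<pi>0$x$k powr (D x / (D x + D (\<Phi> x))) * \<pi>0$(\<Phi> x)$k powr (1 - D x / (D x + D (\<Phi> x))))"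
    by (simp add: cc_def G_def lam_def)
  have E1: "Bpol D \<pi> \<pi>0 + Bpol D \<pi> \<pi>0 = Bpol D \<pi> G + Bpol D \<pi> G + ereal C" if "\<pi> \<in> C_coh_dag \<Phi>" for \<pi>
  proof -
    have p0: "\<And>x k. 0 \<le> \<pi>$x$k" and ps: "\<And>x. \<pi>$(\<Phi> x) = \<pi>$x" using that by (auto simp: C_coh_dag_def)
    have r1: "Bpol D \<pi> \<pi>0 = (\<Sum>x\<in>UNIV. ereal (D (\<Phi> x)) * KL (\<pi>$x) (\<pi>0$(\<Phi> x)))"
      unfolding Bpol_def by (subst sum_inv[OF inv, symmetric]) (simp add: ps)
    have r2: "Bpol D \<pi> G = (\<Sum>x\<in>UNIV. ereal (D (\<Phi> x)) * KL (\<pi>$x) (G$x))"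
      unfolding Bpol_def by (subst sum_inv[OF inv, symmetric]) (simp add: ps Gsym)
    have "Bpol D \<pi> \<pi>0 + Bpol D \<pi> \<pi>0 = (\<Sum>x\<in>UNIV. ereal (D x) * KL (\<pi>$x) (\<pi>0$x) + ereal (D (\<Phi> x)) * KL (\<pi>$x) (\<pi>0$(\<Phi> x)))"
      by (subst (2) r1) (simp add: Bpol_def sum.distrib)
    also have "\<dots> = (\<Sum>x\<in>UNIV. ereal (D x) * KL (\<pi>$x) (G$x) + ereal (D (\<Phi> x)) * KL (\<pi>$x) (G$x) + ereal (cc x))"
    proof (rule sum.cong[OF refl])
      fix x
      show "ereal (D x) * KL (\<pi>$x) (\<pi>0$x) + ereal (D (\<Phi> x)) * KL (\<pi>$x) (\<pi>0$(\<Phi> x)) =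
            ereal (D x) * KL (\<pi>$x) (G$x) + ereal (D (\<Phi> x)) * KL (\<pi>$x) (G$x) + ereal (cc x)"
        unfolding Gx ccx by (rule KL_split) (auto simp: p0 a0 Dp)
    qed
    also have "\<dots> = Bpol D \<pi> G + Bpol D \<pi> G + ereal C"
      by (subst (2) r2) (simp add: Bpol_def sum.distrib C_def)
    finally show ?thesis .
  qed
  have nnb: "\<And>\<pi> \<rho>. \<forall>x k. 0 \<le> \<pi>$x$k \<Longrightarrow> \<forall>x k. 0 \<le> \<rho>$x$k \<Longrightarrow> 0 \<le> Bpol D \<pi> \<rho>"
    using Bpol_nonneg D_pos by blast
  have cohnn: "\<And>\<pi>. \<pi> \<in> C_coh_dag \<Phi> \<Longrightarrow> \<forall>x k. 0 \<le> \<pi>$x$k" by (simp add: C_coh_dag_def)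
  have cohs: "\<And>\<pi> x. \<pi> \<in> C_coh_dag \<Phi> \<Longrightarrow> \<pi>$(\<Phi> x) = \<pi>$x" by (simp add: C_coh_dag_def)
  have GG: "Bpol D G G = 0" by (simp add: Bpol_def KL_def kl_term_self G0)
  have barG: "\<pi>bar = G"
  proof -
    have e1: "Bpol D G \<pi>0 + Bpol D G \<pi>0 = ereal C" using E1[OF GC] GG by simp
    have "Bpol D \<pi>bar \<pi>0 + Bpol D \<pi>bar \<pi>0 \<le> Bpol D G \<pi>0 + Bpol D G \<pi>0"
      using pibar_min GC by (intro add_mono) auto
    hence le: "Bpol D \<pi>bar G + Bpol D \<pi>bar G + ereal C \<le> ereal C" using E1[OF pibar] e1 by simp
    have X0: "0 \<le> Bpol D \<pi>bar G" using nnb cohnn[OF pibar] G0 by blast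
    have "Bpol D \<pi>bar G = 0"
    proof (cases "Bpol D \<pi>bar G")
      case (real r) thus ?thesis using le X0 by simp
    next
      case PInf thus ?thesis using le by simp
    next
      case MInf thus ?thesis using X0 by simp
    qed
    thus ?thesis using Bpol_zero[OF D_pos cohnn[OF pibar]] G0 by blast
  qed
  show ?thesis
  proof (cases "Bpol D \<pi>star \<pi>0 = \<infinity>")
    case True thus ?thesis by simp
  next
    case fin: False
    have sC: "\<pi>star \<in> C_coh_dag \<Phi>" using pistar by (simp add: C_coh_def)
    have hC: "\<pi>hat \<in> C_coh_dag \<Phi>" using pihat by (simp add: C_coh_def)
    have s0: "\<forall>x k. 0 \<le> \<pi>star$x$k" using cohnn[OF sC] .
    have h0: "\<forall>x k. 0 \<le> \<pi>hat$x$k" using cohnn[OF hC] .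
    have G0': "\<forall>x k. 0 \<le> G$x$k" using G0 by blast
    have a0': "\<forall>x k. 0 \<le> \<pi>0$x$k" using a0 by blast
    have sa: "\<And>x k. 0 < \<pi>star$x$k \<Longrightarrow> 0 < \<pi>0$x$k" using Bpol_fin[OF D_pos s0 a0' fin] by blast
    have sG: "\<And>x k. 0 < \<pi>star$x$k \<Longrightarrow> 0 < G$x$k"
    proof -
      fix x k assume sp: "0 < \<pi>star$x$k"
      moreover have "\<pi>star$(\<Phi> x)$k = \<pi>star$x$k" using cohs[OF sC] by simp
      ultimately have "0 < \<pi>0$x$k" "0 < \<pi>0$(\<Phi> x)$k" using sa by auto
      thus "0 < G$x$k" by (simp add: G_def)
    qed
    define FR where "FR \<pi> = (\<Sum>x\<in>UNIV. D x * (\<Sum>k\<in>UNIV. kr (\<pi>$x$k) (G$x$k)))" for \<pi> :: "real^'y^'x"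
    have YG: "Bpol D \<pi>star G = ereal (FR \<pi>star)" unfolding FR_def
      by (rule Bpol_real) (use s0 G0 sG in auto)
    have B0: "Bpol D \<pi>star \<pi>0 = ereal (FR \<pi>star + C/2)"
    proof -
      have e: "Bpol D \<pi>star \<pi>0 + Bpol D \<pi>star \<pi>0 = ereal (FR \<pi>star + FR \<pi>star + C)" using E1[OF sC] YG by simp
      obtain b where "Bpol D \<pi>star \<pi>0 = ereal b" using fin nnb[OF s0 a0'] by (cases "Bpol D \<pi>star \<pi>0") auto
      thus ?thesis using e by simp
    qed
    have hmin: "\<And>\<pi>. \<pi> \<in> C_coh \<Phi> \<inter> PiF \<Longrightarrow> Bpol D \<pi>hat G \<le> Bpol D \<pi> G" using pihat_min barG by auto
    have "Bpol D \<pi>hat G \<noteq> \<infinity>" using hmin[OF pistar] YG by auto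
    hence hG: "\<And>x k. 0 < \<pi>hat$x$k \<Longrightarrow> 0 < G$x$k" using Bpol_fin[OF D_pos h0 G0'] by blast
    have YH: "Bpol D \<pi>hat G = ereal (FR \<pi>hat)" unfolding FR_def
      by (rule Bpol_real) (use h0 G0 hG in auto)
    define T where "T x k t = (if \<pi>star$x$k = 0 \<and> \<pi>hat$x$k = 0 then 0 else (\<pi>star$x$k - \<pi>hat$x$k) * ln (((1-t)*\<pi>hat$x$k + t * \<pi>star$x$k)/G$x$k))" for x k and t :: real
    define At where "At x k t = (if \<pi>hat$x$k > 0 then (\<pi>star$x$k - \<pi>hat$x$k) * ln (((1-t)*\<pi>hat$x$k + t * \<pi>star$x$k)/G$x$k) else if \<pi>star$x$k > 0 then \<pi>star$x$k * ln (\<pi>star$x$k/G$x$k) else 0)" for x k and t :: real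
    define mt where "mt x k = (if \<pi>hat$x$k = 0 \<and> \<pi>star$x$k > 0 then \<pi>star$x$k else 0)" for x k
    define S where "S t = (\<Sum>x\<in>UNIV. D x * (\<Sum>k\<in>UNIV. T x k t))" for t
    define A where "A t = (\<Sum>x\<in>UNIV. D x * (\<Sum>k\<in>UNIV. At x k t))" for t
    define M where "M = (\<Sum>x\<in>UNIV. D x * (\<Sum>k\<in>UNIV. mt x k))"
    have Spos: "0 \<le> S t" if t: "0 < t" "t < 1" for t
    proof -
      define pt where "pt = (1-t) *\<^sub>R \<pi>hat + t *\<^sub>R \<pi>star"
      have ptc: "\<And>x k. pt$x$k = (1-t)*\<pi>hat$x$k + t * \<pi>star$x$k" by (simp add: pt_def)
      have "pt \<in> PiF" unfolding pt_def using Pi_convex pistar pihat t by (intro convexD) auto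
      moreover have "pt \<in> C_coh_dag \<Phi>" 
        using s0 h0 t cohs[OF sC] cohs[OF hC] by (simp add: C_coh_dag_def ptc) (simp add: pt_def)
      ultimately have ptC: "pt \<in> C_coh \<Phi> \<inter> PiF" using Pi_sub by (auto simp: C_coh_def)
      have pt0: "\<forall>x k. 0 \<le> pt$x$k" using s0 h0 t by (simp add: ptc)
      have ptG: "\<forall>x k. 0 < pt$x$k \<longrightarrow> 0 < G$x$k"
      proof (intro allI impI)
        fix x k assume pp: "0 < pt$x$k"
        have "0 < \<pi>hat$x$k \<or> 0 < \<pi>star$x$k"
        proof (rule ccontr)
          assume "\<not> (0 < \<pi>hat$x$k \<or> 0 < \<pi>star$x$k)"
          hence "\<pi>hat$x$k = 0" "\<pi>star$x$k = 0" using s0 h0 by (auto simp: less_le)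
          thus False using pp by (simp add: ptc)
        qed
        thus "0 < G$x$k" using sG hG by blast
      qed
      have "ereal (FR \<pi>hat) \<le> ereal (FR pt)" using hmin[OF ptC] YH Bpol_real[OF pt0 G0' ptG] by (simp add: FR_def)
      hence le: "FR \<pi>hat \<le> FR pt" by simp
      have "FR pt - FR \<pi>hat = (\<Sum>x\<in>UNIV. D x * (\<Sum>k\<in>UNIV. kr (pt$x$k) (G$x$k) - kr (\<pi>hat$x$k) (G$x$k)))"
        by (simp add: FR_def sum_subtractf right_diff_distrib)
      also have "\<dots> \<le> (\<Sum>x\<in>UNIV. D x * (\<Sum>k\<in>UNIV. t * T x k t))"
      proof (intro sum_mono mult_left_mono)
        fix x k
        show "kr (pt$x$k) (G$x$k) - kr (\<pi>hat$x$k) (G$x$k) \<le> t * T x k t"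
          unfolding ptc T_def using conv_term[of "G$x$k" "\<pi>hat$x$k" "\<pi>star$x$k" t] G0 h0 s0 t sG hG by simp
      qed (use Dp less_imp_le in auto)
      also have "\<dots> = t * S t" by (simp add: S_def sum_distrib_left[symmetric] mult_ac)
      finally have "0 \<le> t * S t" using le by simp
      thus ?thesis using t by (simp add: zero_le_mult_iff)
    qed
    have Sdec: "S t = A t + M * ln t" if tp: "0 < t" for t
    proof -
      have Te: "\<And>x k. T x k t = At x k t + mt x k * ln t"
        unfolding T_def At_def mt_def
        using decomp_term[of _ _ t] h0 s0 tp sG by blast
      have "S t = (\<Sum>x\<in>UNIV. D x * ((\<Sum>k\<in>UNIV. At x k t) + (\<Sum>k\<in>UNIV. mt x k) * ln t))"
        by (simp add: S_def Te sum.distrib sum_distrib_right)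
      also have "\<dots> = (\<Sum>x\<in>UNIV. D x * (\<Sum>k\<in>UNIV. At x k t) + (D x * (\<Sum>k\<in>UNIV. mt x k)) * ln t)"
        by (simp add: distrib_left mult.assoc)
      also have "\<dots> = A t + M * ln t"
        by (simp add: A_def M_def sum.distrib sum_distrib_right)
      finally show ?thesis .
    qed
    have Alim: "(A \<longlongrightarrow> A 0) (at_right 0)"
    proof -
      have L: "((\<lambda>t. At x k t) \<longlongrightarrow> At x k 0) (at_right 0)" for x k
      proof (cases "\<pi>hat$x$k > 0")
        case True
        have g: "G$x$k > 0" using hG True by blast
        have "((\<lambda>t. (\<pi>star$x$k - \<pi>hat$x$k) * ln (((1-t)*\<pi>hat$x$k + t * \<pi>star$x$k)/G$x$k)) \<longlongrightarrow>
               (\<pi>star$x$k - \<pi>hat$x$k) * ln (((1-0)*\<pi>hat$x$k + 0 * \<pi>star$x$k)/G$x$k)) (at_right 0)"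
          using True g by (intro tendsto_intros) auto
        thus ?thesis using True by (simp add: At_def)
      next
        case False thus ?thesis by (simp add: At_def)
      qed
      show ?thesis unfolding A_def by (intro tendsto_sum tendsto_mult_left L)
    qed
    have ev: "eventually (\<lambda>t. 0 < t \<and> t < 1) (at_right (0::real))"
      using eventually_at_right_real[of 0 1] by (rule eventually_mono) auto
    have evS: "eventually (\<lambda>t. 0 \<le> A t + M * ln t) (at_right (0::real))"
      using ev by (rule eventually_mono) (use Spos Sdec in auto)
    have mt0: "\<And>x k. 0 \<le> mt x k" using s0 by (simp add: mt_def)
    have nobad: "0 < \<pi>hat$x$k" if sp: "0 < \<pi>star$x$k" for x k
    proof (rule ccontr)
      assume nh: "\<not> 0 < \<pi>hat$x$k"
      hence h0x: "\<pi>hat$x$k = 0" using h0 by (metis less_eq_real_def)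
      have "D x * mt x k \<le> D x * (\<Sum>k\<in>UNIV. mt x k)"
        by (intro mult_left_mono member_le_sum) (auto simp: mt0 Dp less_imp_le)
      also have "\<dots> \<le> M" unfolding M_def
        by (rule member_le_sum) (auto intro!: mult_nonneg_nonneg sum_nonneg simp: mt0 Dp less_imp_le)
      finally have Mp: "0 < M" using sp h0x Dp[of x] by (simp add: mt_def) (smt (verit) mult_pos_pos)
      have "LIM t at_right 0. M * ln t :> at_bot"
        by (rule filterlim_tendsto_pos_mult_at_bot[OF tendsto_const Mp ln_at_0])
      hence "LIM t at_right 0. A t + M * ln t :> at_bot"
        using filterlim_tendsto_add_at_bot_iff[OF Alim] by simp
      hence "eventually (\<lambda>t. A t + M * ln t \<le> -1) (at_right (0::real))"
        by (simp add: filterlim_at_bot)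
      hence "eventually (\<lambda>t. False) (at_right (0::real))"
        using evS by eventually_elim auto
      thus False by simp
    qed
    have "\<And>x k. mt x k = 0" using nobad by (fastforce simp: mt_def)
    hence M0: "M = 0" by (simp add: M_def)
    have A0: "0 \<le> A 0"
      by (rule tendsto_lowerbound[OF Alim]) (use evS M0 in auto)
    have Z: "Bpol D \<pi>star \<pi>hat = ereal (\<Sum>x\<in>UNIV. D x * (\<Sum>k\<in>UNIV. kr (\<pi>star$x$k) (\<pi>hat$x$k)))"
      by (rule Bpol_real) (use s0 h0 nobad in auto)
    have "A 0 \<le> (\<Sum>x\<in>UNIV. D x * (\<Sum>k\<in>UNIV. kr (\<pi>star$x$k) (G$x$k) - kr (\<pi>star$x$k) (\<pi>hat$x$k)))"
      unfolding A_def
    proof (intro sum_mono mult_left_mono)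
      fix x k
      show "At x k 0 \<le> kr (\<pi>star$x$k) (G$x$k) - kr (\<pi>star$x$k) (\<pi>hat$x$k)"
      proof -
        have "At x k 0 = (if \<pi>hat$x$k > 0 then (\<pi>star$x$k - \<pi>hat$x$k) * ln (\<pi>hat$x$k/G$x$k) else if \<pi>star$x$k > 0 then \<pi>star$x$k * ln (\<pi>star$x$k/G$x$k) else 0)"
          by (simp add: At_def)
        also have "\<dots> \<le> kr (\<pi>star$x$k) (G$x$k) - kr (\<pi>star$x$k) (\<pi>hat$x$k)"
          by (rule fin_term) (use G0 h0 s0 nobad hG in auto)
        finally show ?thesis .
      qed
    qed (use Dp less_imp_le in auto)
    also have "\<dots> = FR \<pi>star - (\<Sum>x\<in>UNIV. D x * (\<Sum>k\<in>UNIV. kr (\<pi>star$x$k) (\<pi>hat$x$k)))"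
      by (simp add: FR_def sum_subtractf right_diff_distrib)
    finally have zle: "(\<Sum>x\<in>UNIV. D x * (\<Sum>k\<in>UNIV. kr (\<pi>star$x$k) (\<pi>hat$x$k))) \<le> FR \<pi>star"
      using A0 by simp
    have hell_sym: "\<And>p q. hell2 p q = hell2 q p" by (simp add: hell2_def mult.commute)
    define m where "m x = min (lam x) (1 - lam x)" for x
    have mP: "\<And>x. m (\<Phi> x) = m x" by (simp add: m_def lamP min.commute)
    have Hs': "Hs = (\<Sum>x\<in>UNIV. D x * (2 * m x * hell2 (\<pi>0$x) (\<pi>0$(\<Phi> x))))"
      by (simp add: Hs_def m_def lam_def)
    have Hs'': "Hs = (\<Sum>x\<in>UNIV. D (\<Phi> x) * (2 * m x * hell2 (\<pi>0$x) (\<pi>0$(\<Phi> x))))"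
      unfolding Hs' by (subst sum_inv[OF inv, symmetric]) (simp add: mP invx hell_sym)
    have "2 * Hs = (\<Sum>x\<in>UNIV. (D x + D (\<Phi> x)) * (2 * m x * hell2 (\<pi>0$x) (\<pi>0$(\<Phi> x))))"
    proof -
      have "2 * Hs = Hs + Hs" by simp
      also have "\<dots> = (\<Sum>x\<in>UNIV. D x * (2 * m x * hell2 (\<pi>0$x) (\<pi>0$(\<Phi> x))) + D (\<Phi> x) * (2 * m x * hell2 (\<pi>0$x) (\<pi>0$(\<Phi> x))))"
        by (subst (1) Hs', subst Hs'') (simp add: sum.distrib)
      also have "\<dots> = (\<Sum>x\<in>UNIV. (D x + D (\<Phi> x)) * (2 * m x * hell2 (\<pi>0$x) (\<pi>0$(\<Phi> x))))"
        by (simp add: distrib_right)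
      finally show ?thesis .
    qed
    also have "\<dots> \<le> C"
      unfolding C_def cc_def
    proof (intro sum_mono mult_left_mono)
      fix x
      have "2 * m x * hell2 (\<pi>0$x) (\<pi>0$(\<Phi> x)) = m x * ((\<Sum>k\<in>UNIV. \<pi>0$x$k) + (\<Sum>k\<in>UNIV. \<pi>0$(\<Phi> x)$k) - 2 * (\<Sum>k\<in>UNIV. sqrt (\<pi>0$x$k * \<pi>0$(\<Phi> x)$k)))"
        by (simp add: hell2_def asum algebra_simps)
      also have "\<dots> = (\<Sum>k\<in>UNIV. m x * (\<pi>0$x$k + \<pi>0$(\<Phi> x)$k - 2 * sqrt (\<pi>0$x$k * \<pi>0$(\<Phi> x)$k)))"
      proof -
        have "(\<Sum>k\<in>UNIV. \<pi>0$x$k + \<pi>0$(\<Phi> x)$k - 2 * sqrt (\<pi>0$x$k * \<pi>0$(\<Phi> x)$k)) = (\<Sum>k\<in>UNIV. \<pi>0$x$k) + (\<Sum>k\<in>UNIV. \<pi>0$(\<Phi> x)$k) - 2 * (\<Sum>k\<in>UNIV. sqrt (\<pi>0$x$k * \<pi>0$(\<Phi> x)$k))"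
          by (simp add: sum.distrib sum_subtractf sum_distrib_left)
        thus ?thesis by (simp add: sum_distrib_left[symmetric])
      qed
      also have "\<dots> \<le> (\<Sum>k\<in>UNIV. lam x * \<pi>0$x$k + (1 - lam x) * \<pi>0$(\<Phi> x)$k - G$x$k)"
      proof (rule sum_mono)
        fix k
        show "m x * (\<pi>0$x$k + \<pi>0$(\<Phi> x)$k - 2 * sqrt (\<pi>0$x$k * \<pi>0$(\<Phi> x)$k)) \<le> lam x * \<pi>0$x$k + (1 - lam x) * \<pi>0$(\<Phi> x)$k - G$x$k"
          unfolding m_def G_def using young_hell2[of "\<pi>0$x$k" "\<pi>0$(\<Phi> x)$k" "lam x"] a0 lam01 by simp
      qed
      finally show "2 * m x * hell2 (\<pi>0$x) (\<pi>0$(\<Phi> x)) \<le> (\<Sum>k\<in>UNIV. lam x * \<pi>0$x$k + (1 - lam x) * \<pi>0$(\<Phi> x)$k - G$x$k)" .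
    next
      fix x show "0 \<le> D x + D (\<Phi> x)" using Dp[of x] Dp[of "\<Phi> x"] by simp
    qed
    finally have HC: "Hs \<le> C/2" by simp
    have "ereal Hs + Bpol D \<pi>star \<pi>hat \<le> Bpol D \<pi>star \<pi>0"
      unfolding B0 Z using HC zle by simp
    thus ?thesis by (simp add: Hs_def)
  qed
qed

end
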